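(* Let $G$ be a split VPT graph with split partition $(S,K)$ such that $|N(v)\cap S|\leq 2$ for every $v\in K$, and let $n\geq 4$. If the branch graph $B(G/K)$ contains an induced cycle $C_n$, then $G$ contains an induced $n$-sun $S_n$.
   Context: All graphs are finite, simple and connected. A graph is split if its vertex set partitions into a stable set $S$ and a clique (maximal complete set) $K$. VPT graphs are vertex-intersection graphs of paths in a tree. For $n\geq 4$, the $n$-sun $S_n$ is the split graph with stable set $\{s_1,\dots,s_n\}$, central clique $\{v_1,\dots,v_n\}$, $N(s_i)=\{v_i,v_{i+1}\}$ for $1\le i\le n-1$ and $N(s_n)=\{v_n,v_1\}$. For a clique $C$ of $G$, the branch graph $B(G/C)$ has vertex set the vertices of $V(G)\setminus C$ adjacent to some vertex of $C$, two such vertices $v,w$ being adjacent iff (1) $vw\notin E(G)$; (2) some vertex of $C$ is adjacent to both; (3) there exist $v',w'\in C$ with $v'$ adjacent to $v$ but not $w$, and $w'$ adjacent to $w$ but not $v$. *)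

theory Defs
  imports Main
begin

definition simple_graph :: "'a set \<Rightarrow> ('a \<Rightarrow> 'a \<Rightarrow> bool) \<Rightarrow> bool" where
  "simple_graph V E \<longleftrightarrow> finite V \<and> (\<forall>u v. E u v \<longrightarrow> u \<in> V \<and> v \<in> V)
     \<and> (\<forall>u v. E u v \<longrightarrow> E v u) \<and> (\<forall>v. \<not> E v v)"

definition connected_graph :: "'a set \<Rightarrow> ('a \<Rightarrow> 'a \<Rightarrow> bool) \<Rightarrow> bool" where
  "connected_graph V E \<longleftrightarrow> V \<noteq> {} \<and> (\<forall>u\<in>V. \<forall>v\<in>V. E\<^sup>*\<^sup>* u v)"

definition nbhd :: "('a \<Rightarrow> 'a \<Rightarrow> bool) \<Rightarrow> 'a \<Rightarrow> 'a set" where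
  "nbhd E v = {u. E v u}"

definition is_path :: "'a set \<Rightarrow> ('a \<Rightarrow> 'a \<Rightarrow> bool) \<Rightarrow> 'a list \<Rightarrow> bool" where
  "is_path V E ps \<longleftrightarrow> ps \<noteq> [] \<and> distinct ps \<and> set ps \<subseteq> V
     \<and> (\<forall>i. Suc i < length ps \<longrightarrow> E (ps ! i) (ps ! Suc i))"

definition has_cycle :: "'a set \<Rightarrow> ('a \<Rightarrow> 'a \<Rightarrow> bool) \<Rightarrow> bool" where
  "has_cycle V E \<longleftrightarrow> (\<exists>cs. length cs \<ge> 3 \<and> is_path V E cs \<and> E (last cs) (hd cs))"

definition is_tree :: "'a set \<Rightarrow> ('a \<Rightarrow> 'a \<Rightarrow> bool) \<Rightarrow> bool" where
  "is_tree V E \<longleftrightarrow> simple_graph V E \<and> connected_graph V E \<and> \<not> has_cycle V E"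

text \<open>VPT graph: vertex-intersection graph of paths in a tree (host tree vertices taken
  in nat, w.l.o.g. since every finite tree is isomorphic to one on nat).\<close>
definition VPT :: "'a set \<Rightarrow> ('a \<Rightarrow> 'a \<Rightarrow> bool) \<Rightarrow> bool" where
  "VPT V E \<longleftrightarrow> (\<exists>(T :: nat set) ET (P :: 'a \<Rightarrow> nat set). is_tree T ET
     \<and> (\<forall>v\<in>V. \<exists>ps. is_path T ET ps \<and> P v = set ps)
     \<and> (\<forall>u\<in>V. \<forall>v\<in>V. u \<noteq> v \<longrightarrow> (E u v \<longleftrightarrow> P u \<inter> P v \<noteq> {})))"

definition complete_set :: "('a \<Rightarrow> 'a \<Rightarrow> bool) \<Rightarrow> 'a set \<Rightarrow> bool" where
  "complete_set E C \<longleftrightarrow> (\<forall>u\<in>C. \<forall>v\<in>C. u \<noteq> v \<longrightarrow> E u v)"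

definition is_clique :: "'a set \<Rightarrow> ('a \<Rightarrow> 'a \<Rightarrow> bool) \<Rightarrow> 'a set \<Rightarrow> bool" where
  "is_clique V E C \<longleftrightarrow> C \<subseteq> V \<and> complete_set E C
     \<and> (\<forall>D. C \<subset> D \<and> D \<subseteq> V \<longrightarrow> \<not> complete_set E D)"

definition stable_set :: "'a set \<Rightarrow> ('a \<Rightarrow> 'a \<Rightarrow> bool) \<Rightarrow> 'a set \<Rightarrow> bool" where
  "stable_set V E S \<longleftrightarrow> S \<subseteq> V \<and> (\<forall>u\<in>S. \<forall>v\<in>S. \<not> E u v)"

definition split_partition :: "'a set \<Rightarrow> ('a \<Rightarrow> 'a \<Rightarrow> bool) \<Rightarrow> 'a set \<Rightarrow> 'a set \<Rightarrow> bool" where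
  "split_partition V E S K \<longleftrightarrow> S \<inter> K = {} \<and> S \<union> K = V
     \<and> stable_set V E S \<and> is_clique V E K"

definition branch_vertices :: "'a set \<Rightarrow> ('a \<Rightarrow> 'a \<Rightarrow> bool) \<Rightarrow> 'a set \<Rightarrow> 'a set" where
  "branch_vertices V E C = {v \<in> V - C. \<exists>c\<in>C. E v c}"

definition branch_adj :: "('a \<Rightarrow> 'a \<Rightarrow> bool) \<Rightarrow> 'a set \<Rightarrow> 'a \<Rightarrow> 'a \<Rightarrow> bool" where
  "branch_adj E C v w \<longleftrightarrow> \<not> E v w \<and> (\<exists>c\<in>C. E c v \<and> E c w)
     \<and> (\<exists>v'\<in>C. \<exists>w'\<in>C. E v' v \<and> \<not> E v' w \<and> E w' w \<and> \<not> E w' v)"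

definition has_induced_cycle :: "'a set \<Rightarrow> ('a \<Rightarrow> 'a \<Rightarrow> bool) \<Rightarrow> nat \<Rightarrow> bool" where
  "has_induced_cycle V E n \<longleftrightarrow> (\<exists>x. inj_on x {..<n} \<and> x ` {..<n} \<subseteq> V
     \<and> (\<forall>i<n. \<forall>j<n. E (x i) (x j) \<longleftrightarrow> (j = Suc i mod n \<or> i = Suc j mod n)))"

definition has_induced_sun :: "'a set \<Rightarrow> ('a \<Rightarrow> 'a \<Rightarrow> bool) \<Rightarrow> nat \<Rightarrow> bool" where
  "has_induced_sun V E n \<longleftrightarrow> (\<exists>s v. inj_on s {..<n} \<and> inj_on v {..<n}
     \<and> s ` {..<n} \<subseteq> V \<and> v ` {..<n} \<subseteq> V \<and> s ` {..<n} \<inter> v ` {..<n} = {}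
     \<and> (\<forall>i<n. \<forall>j<n. \<not> E (s i) (s j))
     \<and> (\<forall>i<n. \<forall>j<n. i \<noteq> j \<longrightarrow> E (v i) (v j))
     \<and> (\<forall>i<n. \<forall>j<n. E (s i) (v j) \<longleftrightarrow> (j = i \<or> j = Suc i mod n)))"

end

theory Submission
  imports Defs
begin

lemma smod: "i < (n::nat) \<Longrightarrow> Suc i mod n = (if Suc i = n then 0 else Suc i)"
  by (cases "Suc i = n") auto
lemma suc_mod_inj: "i < (n::nat) \<Longrightarrow> j < n \<Longrightarrow> Suc i mod n = Suc j mod n \<Longrightarrow> i = j"
  by (cases "Suc i = n"; cases "Suc j = n") (simp_all add: smod)
lemma suc_mod_ne: "i < (n::nat) \<Longrightarrow> n \<ge> 2 \<Longrightarrow> Suc i mod n \<noteq> i"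
  by (cases "Suc i = n") (simp_all add: smod)
lemma suc_mod_two:
  assumes a: "i < (n::nat)" "j < n" "n \<ge> 3" "i = Suc j mod n" "j = Suc i mod n"
  shows False
proof -
  have ei: "i = (if Suc j = n then 0 else Suc j)" using smod[OF a(2)] a(4) by simp
  have ej: "j = (if Suc i = n then 0 else Suc i)" using smod[OF a(1)] a(5) by simp
  show False
  proof (cases "Suc j = n")
    case True
    then have "i = 0" using ei by simp
    then have "j = 1" using ej a(3) by simp
    then show False using True a(3) by simp
  next
    case False
    then have "i = Suc j" using ei by simp
    then show False using ej a(1) a(3) by (cases "Suc i = n") simp_all
  qed
qed

theorem mainTheorem12:
  fixes V :: "'a set" and E :: "'a \<Rightarrow> 'a \<Rightarrow> bool" and S K :: "'a set" and n :: nat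
  assumes "simple_graph V E" and "connected_graph V E" and "VPT V E"
    and "split_partition V E S K"
    and "\<forall>v\<in>K. card (nbhd E v \<inter> S) \<le> 2"
    and "n \<ge> 4"
    and "has_induced_cycle (branch_vertices V E K) (branch_adj E K) n"
  shows "has_induced_sun V E n"
proof -
  have sg: "finite V" "\<And>u v. E u v \<Longrightarrow> u \<in> V \<and> v \<in> V" "\<And>u v. E u v \<Longrightarrow> E v u"
    using assms(1) unfolding simple_graph_def by auto
  have sp: "S \<inter> K = {}" "S \<union> K = V" "\<And>u v. u \<in> S \<Longrightarrow> v \<in> S \<Longrightarrow> \<not> E u v"
     "K \<subseteq> V" "complete_set E K"
    using assms(4) unfolding split_partition_def stable_set_def is_clique_def by auto
  obtain x where xinj: "inj_on x {..<n}" and xV: "x ` {..<n} \<subseteq> branch_vertices V E K"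
    and xE: "\<forall>i<n. \<forall>j<n. branch_adj E K (x i) (x j) \<longleftrightarrow> (j = Suc i mod n \<or> i = Suc j mod n)"
    using assms(7) unfolding has_induced_cycle_def by blast
  have xS: "\<And>i. i < n \<Longrightarrow> x i \<in> S" using xV sp unfolding branch_vertices_def by auto
  have n0: "n > 0" using assms(6) by simp
  have "\<forall>j. \<exists>c. j < n \<longrightarrow> c \<in> K \<and> E c (x j) \<and> E c (x (Suc j mod n))"
  proof (intro allI)
    fix j
    show "\<exists>c. j < n \<longrightarrow> c \<in> K \<and> E c (x j) \<and> E c (x (Suc j mod n))"
    proof (cases "j < n")
      case True
      then have "branch_adj E K (x j) (x (Suc j mod n))" using xE n0 by simp
      then show ?thesis unfolding branch_adj_def by blast
    qed simp
  qed
  then obtain c where c: "\<And>j. j < n \<Longrightarrow> c j \<in> K" "\<And>j. j < n \<Longrightarrow> E (c j) (x j)"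
    "\<And>j. j < n \<Longrightarrow> E (c j) (x (Suc j mod n))"
    by metis
  have nb: "\<And>j. j < n \<Longrightarrow> nbhd E (c j) \<inter> S = {x j, x (Suc j mod n)}"
  proof -
    fix j assume j: "j < n"
    have sub: "{x j, x (Suc j mod n)} \<subseteq> nbhd E (c j) \<inter> S"
      using c j xS n0 unfolding nbhd_def by auto
    have ne: "x j \<noteq> x (Suc j mod n)"
      using xinj j n0 suc_mod_ne[of j n] assms(6) unfolding inj_on_def by auto
    have fin: "finite (nbhd E (c j) \<inter> S)" using sg sp unfolding nbhd_def
      by (meson finite_Int finite_subset subsetI Un_upper1)
    have "card (nbhd E (c j) \<inter> S) \<le> 2" using assms(5) c(1)[OF j] by auto
    moreover have "card {x j, x (Suc j mod n)} = 2" using ne by simp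
    ultimately show "nbhd E (c j) \<inter> S = {x j, x (Suc j mod n)}"
      using sub fin by (metis card_seteq)
  qed
  have adj: "\<And>i j. i < n \<Longrightarrow> j < n \<Longrightarrow> E (x i) (c j) \<longleftrightarrow> (i = j \<or> i = Suc j mod n)"
  proof -
    fix i j assume ij: "i < n" "j < n"
    have "E (x i) (c j) \<longleftrightarrow> x i \<in> nbhd E (c j) \<inter> S"
      using sg(3) xS[OF ij(1)] unfolding nbhd_def by blast
    also have "\<dots> \<longleftrightarrow> x i = x j \<or> x i = x (Suc j mod n)" using nb[OF ij(2)] by auto
    also have "\<dots> \<longleftrightarrow> (i = j \<or> i = Suc j mod n)"
      using inj_on_eq_iff[OF xinj, of i j] inj_on_eq_iff[OF xinj, of i "Suc j mod n"] ij n0 by simp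
    finally show "E (x i) (c j) \<longleftrightarrow> (i = j \<or> i = Suc j mod n)" .
  qed
  have cinj: "inj_on c {..<n}"
  proof (rule inj_onI)
    fix i j assume i: "i \<in> {..<n}" and j: "j \<in> {..<n}" and eq: "c i = c j"
    have "E (x i) (c j)" using adj[of i i] eq i j by auto
    then have h1: "i = j \<or> i = Suc j mod n" using adj i j by auto
    have "E (x j) (c i)" using adj[of j j] eq i j by auto
    then have h2: "j = i \<or> j = Suc i mod n" using adj i j by auto
    have n3: "n \<ge> 3" using assms(6) by simp
    show "i = j"
    proof (rule ccontr)
      assume "i \<noteq> j"
      then have "i = Suc j mod n" "j = Suc i mod n" using h1 h2 by metis+
      then show False using suc_mod_two[of i n j] i j n3 by blast
    qed
  qed
  define s where "s = (\<lambda>i. x (Suc i mod n))"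
  show ?thesis unfolding has_induced_sun_def
  proof (rule exI[of _ s], rule exI[of _ c], intro conjI allI impI)
    show "inj_on s {..<n}" unfolding s_def inj_on_def
      using xinj n0 suc_mod_inj unfolding inj_on_def by (metis lessThan_iff mod_less_divisor)
    show "inj_on c {..<n}" by (rule cinj)
    show "s ` {..<n} \<subseteq> V" using xS sp n0 unfolding s_def by auto
    show "c ` {..<n} \<subseteq> V" using c(1) sp by auto
    show "s ` {..<n} \<inter> c ` {..<n} = {}"
    proof (rule equals0I)
      fix y assume "y \<in> s ` {..<n} \<inter> c ` {..<n}"
      then obtain i j where ij: "i < n" "j < n" "y = x (Suc i mod n)" "y = c j"
        unfolding s_def by blast
      have "y \<in> S" using xS n0 ij(3) by simp
      moreover have "y \<in> K" using c(1)[OF ij(2)] ij(4) by simp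
      ultimately show False using sp(1) by blast
    qed
    fix i j
    show "i < n \<Longrightarrow> j < n \<Longrightarrow> \<not> E (s i) (s j)" using xS sp(3) n0 unfolding s_def by auto
    show "i < n \<Longrightarrow> j < n \<Longrightarrow> i \<noteq> j \<Longrightarrow> E (c i) (c j)"
    proof -
      assume h: "i < n" "j < n" "i \<noteq> j"
      have "c i \<noteq> c j" using inj_on_eq_iff[OF cinj, of i j] h by simp
      moreover have "c i \<in> K" "c j \<in> K" using c(1) h by auto
      ultimately show "E (c i) (c j)" using sp(5) unfolding complete_set_def by blast
    qed
    assume ij: "i < n" "j < n"
    have "E (s i) (c j) \<longleftrightarrow> (Suc i mod n = j \<or> Suc i mod n = Suc j mod n)"
      unfolding s_def using adj[of "Suc i mod n" j] ij n0 by auto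
    also have "\<dots> \<longleftrightarrow> (j = i \<or> j = Suc i mod n)" using suc_mod_inj ij by auto
    finally show "E (s i) (c j) \<longleftrightarrow> (j = i \<or> j = Suc i mod n)" .
  qed
qed

end
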